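(* There is a function $C(t,\epsilon)$ such that the following holds for every positive integer $t$ and every $\epsilon\in(0,1)$: let $G$ be a connected balanced bipartite graph with parts $X,Y$ each of order $n$, with $\delta(G)\geq 3C(t,\epsilon)$ and with no induced $S_{t,t}$. Then: (i) writing $U_X(\epsilon)=\{u_1,\dots,u_m\}$, there exist $2m$ distinct vertices $v_1^-,v_1^+,\dots,v_m^-,v_m^+\in Y\setminus U_Y(\epsilon)$ such that $u_iv_i^-$ and $u_iv_i^+$ are edges for all $i$; (ii) writing $U_Y(\epsilon)=\{v_1,\dots,v_m\}$, there exist $2m$ distinct vertices $u_1^-,u_1^+,\dots,u_m^-,u_m^+\in X\setminus U_X(\epsilon)$ such that $v_iu_i^-$ and $v_iu_i^+$ are edges for all $i$.
   Context: For positive integers $a,b$, the biclaw $S_{a,b}$ is the graph with vertex set $\{x,x_1,\dots,x_a,y,y_1,\dots,y_b\}$ and edges $xy$, $xy_1,\dots,xy_b$, $yx_1,\dots,yx_a$; "no induced $S_{t,t}$" means no induced subgraph isomorphic to $S_{t,t}$. For a bipartite graph with parts $X,Y$, $\Delta_X=\max_{x\in X} d(x)$, $\Delta_Y=\max_{y\in Y}d(y)$, $U_X(\epsilon)=\{x\in X: d(x)\leq (1-\epsilon)\Delta_X\}$ and $U_Y(\epsilon)=\{y\in Y: d(y)\leq(1-\epsilon)\Delta_Y\}$. $\delta(G)$ is the minimum degree. *)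

theory Defs
  imports Complex_Main
begin

text \<open>Simple graphs on vertex type nat: finite vertex set V and a symmetric,
  irreflexive adjacency relation E (only its restriction to V matters).\<close>

definition simple_graph :: "nat set \<Rightarrow> (nat \<Rightarrow> nat \<Rightarrow> bool) \<Rightarrow> bool" where
  "simple_graph V E \<longleftrightarrow> finite V \<and> (\<forall>u v. E u v \<longrightarrow> E v u) \<and> (\<forall>v. \<not> E v v)"

definition degree :: "nat set \<Rightarrow> (nat \<Rightarrow> nat \<Rightarrow> bool) \<Rightarrow> nat \<Rightarrow> nat" where
  "degree V E v = card {u \<in> V. E v u}"

definition min_degree :: "nat set \<Rightarrow> (nat \<Rightarrow> nat \<Rightarrow> bool) \<Rightarrow> nat" where
  "min_degree V E = Min (degree V E ` V)"

definition max_degree_in :: "nat set \<Rightarrow> (nat \<Rightarrow> nat \<Rightarrow> bool) \<Rightarrow> nat set \<Rightarrow> nat" where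
  "max_degree_in V E X = Max (degree V E ` X)"

definition connected_graph :: "nat set \<Rightarrow> (nat \<Rightarrow> nat \<Rightarrow> bool) \<Rightarrow> bool" where
  "connected_graph V E \<longleftrightarrow> V \<noteq> {} \<and>
     (\<forall>u\<in>V. \<forall>v\<in>V. (\<lambda>a b. a \<in> V \<and> b \<in> V \<and> E a b)\<^sup>*\<^sup>* u v)"

definition bipartition :: "nat set \<Rightarrow> (nat \<Rightarrow> nat \<Rightarrow> bool) \<Rightarrow> nat set \<Rightarrow> nat set \<Rightarrow> bool" where
  "bipartition V E X Y \<longleftrightarrow> X \<inter> Y = {} \<and> X \<union> Y = V \<and>
     (\<forall>u\<in>X. \<forall>v\<in>X. \<not> E u v) \<and> (\<forall>u\<in>Y. \<forall>v\<in>Y. \<not> E u v)"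

definition low_set :: "nat set \<Rightarrow> (nat \<Rightarrow> nat \<Rightarrow> bool) \<Rightarrow> nat set \<Rightarrow> real \<Rightarrow> nat set" where
  "low_set V E X eps = {x \<in> X. real (degree V E x) \<le> (1 - eps) * real (max_degree_in V E X)}"

datatype bc_vertex = BX | BY | BXi nat | BYi nat

definition biclaw_verts :: "nat \<Rightarrow> nat \<Rightarrow> bc_vertex set" where
  "biclaw_verts a b = {BX, BY} \<union> BXi ` {1..a} \<union> BYi ` {1..b}"

fun biclaw_edge :: "bc_vertex \<Rightarrow> bc_vertex \<Rightarrow> bool" where
  "biclaw_edge BX BY = True"
| "biclaw_edge BY BX = True"
| "biclaw_edge BX (BYi _) = True"
| "biclaw_edge (BYi _) BX = True"
| "biclaw_edge BY (BXi _) = True"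
| "biclaw_edge (BXi _) BY = True"
| "biclaw_edge _ _ = False"

definition has_induced_copy ::
  "nat set \<Rightarrow> (nat \<Rightarrow> nat \<Rightarrow> bool) \<Rightarrow> 'b set \<Rightarrow> ('b \<Rightarrow> 'b \<Rightarrow> bool) \<Rightarrow> bool" where
  "has_induced_copy V E W F \<longleftrightarrow> (\<exists>f. inj_on f W \<and> f ` W \<subseteq> V \<and>
     (\<forall>u\<in>W. \<forall>v\<in>W. E (f u) (f v) \<longleftrightarrow> F u v))"

definition induced_biclaw_free :: "nat set \<Rightarrow> (nat \<Rightarrow> nat \<Rightarrow> bool) \<Rightarrow> nat \<Rightarrow> bool" where
  "induced_biclaw_free V E t \<longleftrightarrow> \<not> has_induced_copy V E (biclaw_verts t t) biclaw_edge"

end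

theory Submission
  imports Defs
begin
lemma hall_thm:
  fixes I :: "'i set" and A :: "'i \<Rightarrow> 'b set"
  assumes "finite I" "\<forall>i\<in>I. finite (A i)"
    "\<forall>J\<subseteq>I. card J \<le> card (\<Union>(A ` J))"
  shows "\<exists>f. inj_on f I \<and> (\<forall>i\<in>I. f i \<in> A i)"
  using assms
proof (induction "card I" arbitrary: I A rule: less_induct)
  case less
  have IH: "\<And>I' (A' :: 'i \<Rightarrow> 'b set). card I' < card I \<Longrightarrow> finite I' \<Longrightarrow> (\<forall>i\<in>I'. finite (A' i)) \<Longrightarrow>
     (\<forall>J\<subseteq>I'. card J \<le> card (\<Union>(A' ` J))) \<Longrightarrow> \<exists>f. inj_on f I' \<and> (\<forall>i\<in>I'. f i \<in> A' i)"
    by (rule less.hyps)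
  show ?case
  proof (cases "I = {}")
    case True then show ?thesis by auto
  next
    case False
    show ?thesis
    proof (cases "\<exists>J. J \<noteq> {} \<and> J \<subset> I \<and> card J = card (\<Union>(A ` J))")
      case True
      then obtain J where J: "J \<noteq> {}" "J \<subset> I" "card J = card (\<Union>(A ` J))" by blast
      have finJ: "finite J" using J(2) less.prems(1) finite_subset by blast
      have "card J < card I" using J(2) less.prems(1) psubset_card_mono by blast
      then obtain f1 where f1: "inj_on f1 J" "\<forall>i\<in>J. f1 i \<in> A i"
      proof -
        have "\<forall>i\<in>J. finite (A i)" using J(2) less.prems(2) by blast
        moreover have "\<forall>K\<subseteq>J. card K \<le> card (\<Union>(A ` K))" using J(2) less.prems(3) by blast
        ultimately show ?thesis using IH[of J A] finJ \<open>card J < card I\<close> that by blast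
      qed
      define UJ where "UJ = \<Union>(A ` J)"
      have finUJ: "finite UJ" unfolding UJ_def using finJ J(2) less.prems(2) by blast
      define A2 where "A2 = (\<lambda>i. A i - UJ)"
      have c2: "card (I - J) < card I"
      proof -
        have "card J > 0" using J(1) finJ card_gt_0_iff by blast
        moreover have "card (I - J) = card I - card J" using J(2) finJ card_Diff_subset by blast
        moreover have "card J \<le> card I" using J(2) less.prems(1) card_mono by blast
        ultimately show ?thesis by linarith
      qed
      have hall2: "\<forall>K\<subseteq>I - J. card K \<le> card (\<Union>(A2 ` K))"
      proof (intro allI impI)
        fix K assume K: "K \<subseteq> I - J"
        have finK: "finite K" using K less.prems(1) finite_subset by blast
        have eq: "\<Union>(A2 ` K) = \<Union>(A ` (K \<union> J)) - UJ" unfolding A2_def UJ_def by auto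
        have sub: "UJ \<subseteq> \<Union>(A ` (K \<union> J))" unfolding UJ_def by auto
        have "finite (K \<union> J)" using finK finJ by simp
        moreover have "\<forall>i\<in>K \<union> J. finite (A i)" using K J(2) less.prems(2) by blast
        ultimately have finKJ: "finite (\<Union>(A ` (K \<union> J)))" by simp
        have "card (\<Union>(A2 ` K)) = card (\<Union>(A ` (K \<union> J))) - card UJ"
          unfolding eq using card_Diff_subset[OF finUJ sub] by simp
        moreover have "card (K \<union> J) \<le> card (\<Union>(A ` (K \<union> J)))"
          using spec[OF less.prems(3), of "K \<union> J"] K J(2) by blast
        moreover have "card (K \<union> J) = card K + card J"
          using K finK finJ by (subst card_Un_disjoint) auto
        ultimately show "card K \<le> card (\<Union>(A2 ` K))" using J(3) unfolding UJ_def by linarith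
      qed
      obtain f2 where f2: "inj_on f2 (I - J)" "\<forall>i\<in>I - J. f2 i \<in> A2 i"
      proof -
        have "finite (I - J)" using less.prems(1) by blast
        moreover have "\<forall>i\<in>I - J. finite (A2 i)" using less.prems(2) unfolding A2_def by blast
        ultimately show ?thesis using IH[OF c2 _ _ hall2] that by blast
      qed
      define f where "f = (\<lambda>i. if i \<in> J then f1 i else f2 i)"
      have "inj_on f I"
      proof (rule inj_onI)
        fix i j assume ij: "i \<in> I" "j \<in> I" "f i = f j"
        show "i = j"
        proof (cases "i \<in> J"; cases "j \<in> J")
          assume "i \<in> J" "j \<in> J" then show ?thesis using ij f1(1) unfolding f_def by (auto dest: inj_onD)
        next
          assume "i \<notin> J" "j \<notin> J" then show ?thesis using ij f2(1) unfolding f_def by (auto dest: inj_onD)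
        next
          assume a: "i \<in> J" "j \<notin> J"
          then have "f i \<in> UJ" using f1 unfolding f_def UJ_def by auto
          moreover have "f j \<notin> UJ" using a f2 ij(2) unfolding f_def A2_def by auto
          ultimately show ?thesis using ij by simp
        next
          assume a: "i \<notin> J" "j \<in> J"
          then have "f j \<in> UJ" using f1 unfolding f_def UJ_def by auto
          moreover have "f i \<notin> UJ" using a f2 ij(1) unfolding f_def A2_def by auto
          ultimately show ?thesis using ij by simp
        qed
      qed
      moreover have "\<forall>i\<in>I. f i \<in> A i" using f1 f2 unfolding f_def A2_def by auto
      ultimately show ?thesis by blast
    next
      case False2: False
      obtain i0 where i0: "i0 \<in> I" using False by blast
      have "card {i0} \<le> card (A i0)" using spec[OF less.prems(3), of "{i0}"] i0 by simp
      then have "A i0 \<noteq> {}" by auto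
      then obtain a where a: "a \<in> A i0" by blast
      define A1 where "A1 = (\<lambda>i. A i - {a})"
      have c1: "card (I - {i0}) < card I"
      proof -
        have "card I > 0" using i0 less.prems(1) card_gt_0_iff by blast
        then show ?thesis using i0 less.prems(1) by simp
      qed
      have hall1: "\<forall>K\<subseteq>I - {i0}. card K \<le> card (\<Union>(A1 ` K))"
      proof (intro allI impI)
        fix K assume K: "K \<subseteq> I - {i0}"
        show "card K \<le> card (\<Union>(A1 ` K))"
        proof (cases "K = {}")
          case True then show ?thesis by simp
        next
          case False
          have finK: "finite K" using K less.prems(1) finite_subset by blast
          have "K \<subset> I" using K i0 by blast
          then have "card K < card (\<Union>(A ` K))"
          proof -
            have "card K \<noteq> card (\<Union>(A ` K))" using False2 False \<open>K \<subset> I\<close> by blast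
            moreover have "card K \<le> card (\<Union>(A ` K))" using less.prems(3) \<open>K \<subset> I\<close> by blast
            ultimately show ?thesis by linarith
          qed
          moreover have eqA: "\<Union>(A1 ` K) = \<Union>(A ` K) - {a}" unfolding A1_def by auto
          moreover have "finite (\<Union>(A ` K))" using finK K less.prems(2) by blast
          moreover have "card (\<Union>(A ` K) - {a}) \<ge> card (\<Union>(A ` K)) - 1"
            by (cases "a \<in> \<Union>(A ` K)") (simp_all add: card_Diff_singleton_if)
          ultimately show ?thesis unfolding eqA by linarith
        qed
      qed
      obtain f1 where f1: "inj_on f1 (I - {i0})" "\<forall>i\<in>I - {i0}. f1 i \<in> A1 i"
      proof -
        have "finite (I - {i0})" using less.prems(1) by blast
        moreover have "\<forall>i\<in>I - {i0}. finite (A1 i)" using less.prems(2) unfolding A1_def by blast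
        ultimately show ?thesis using IH[OF c1 _ _ hall1] that by blast
      qed
      define f where "f = f1(i0 := a)"
      have "inj_on f I"
      proof -
        have "inj_on f (I - {i0})" using f1(1) unfolding f_def by (simp add: inj_on_def)
        moreover have "f i0 \<notin> f ` (I - {i0})" using f1(2) unfolding f_def A1_def by auto
        ultimately have "inj_on f (insert i0 (I - {i0}))" using inj_on_insert[of f i0 "I - {i0}"] by blast
        then show ?thesis using i0 by (simp add: insert_absorb)
      qed
      moreover have "\<forall>i\<in>I. f i \<in> A i" using f1(2) a unfolding f_def A1_def by auto
      ultimately show ?thesis by blast
    qed
  qed
qed

lemma card_filter_as_sum:
  assumes "finite S"
  shows "card {x\<in>S. P x} = (\<Sum>x\<in>S. if P x then 1 else 0 :: nat)"
  using assms by (simp add: sum.If_cases Int_def)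

lemma double_count:
  assumes "finite A" "finite Ts"
  shows "(\<Sum>a\<in>A. card {T\<in>Ts. P a T}) = (\<Sum>T\<in>Ts. card {a\<in>A. P a T})"
proof -
  have "(\<Sum>a\<in>A. card {T\<in>Ts. P a T}) = (\<Sum>a\<in>A. \<Sum>T\<in>Ts. if P a T then 1 else 0 :: nat)"
    using assms by (simp add: card_filter_as_sum)
  also have "\<dots> = (\<Sum>T\<in>Ts. \<Sum>a\<in>A. if P a T then 1 else 0 :: nat)"
    by (rule sum.swap)
  also have "\<dots> = (\<Sum>T\<in>Ts. card {a\<in>A. P a T})"
    using assms by (simp add: card_filter_as_sum)
  finally show ?thesis .
qed

lemma count_lemma:
  fixes A B :: "'a set" and E :: "'a \<Rightarrow> 'a \<Rightarrow> bool" and t :: nat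
  assumes finA: "finite A" and finB: "finite B" and t: "t \<ge> 1"
    and nohole: "\<And>A' B'. A' \<subseteq> A \<Longrightarrow> B' \<subseteq> B \<Longrightarrow> card A' = t \<Longrightarrow> card B' = t \<Longrightarrow> \<exists>a\<in>A'. \<exists>b\<in>B'. E a b"
  shows "(\<Sum>a\<in>A. card {b\<in>B. \<not> E a b} choose t) \<le> (t - 1) * (card B choose t)"
proof -
  define Ts where "Ts = {T. T \<subseteq> B \<and> card T = t}"
  have finTs: "finite Ts" unfolding Ts_def using finB by simp
  have cTs: "card Ts = card B choose t" unfolding Ts_def using n_subsets[OF finB] by simp
  have eq1: "card {b\<in>B. \<not> E a b} choose t = card {T\<in>Ts. \<forall>b\<in>T. \<not> E a b}" for a
  proof -
    have "{T\<in>Ts. \<forall>b\<in>T. \<not> E a b} = {T. T \<subseteq> {b\<in>B. \<not> E a b} \<and> card T = t}"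
      unfolding Ts_def by auto
    moreover have "finite {b\<in>B. \<not> E a b}" using finB by simp
    then have "card {T. T \<subseteq> {b\<in>B. \<not> E a b} \<and> card T = t} = card {b\<in>B. \<not> E a b} choose t"
      by (rule n_subsets)
    ultimately show ?thesis by simp
  qed
  have le1: "card {a\<in>A. \<forall>b\<in>T. \<not> E a b} \<le> t - 1" if T: "T \<in> Ts" for T
  proof (rule ccontr)
    assume "\<not> ?thesis"
    then have "t \<le> card {a\<in>A. \<forall>b\<in>T. \<not> E a b}" by simp
    then obtain A' where A': "A' \<subseteq> {a\<in>A. \<forall>b\<in>T. \<not> E a b}" "card A' = t" "finite A'"
      by (rule obtain_subset_with_card_n)
    have "T \<subseteq> B" "card T = t" using T unfolding Ts_def by auto
    then obtain a b where "a \<in> A'" "b \<in> T" "E a b" using nohole[of A' T] A' by blast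
    then show False using A' by blast
  qed
  have "(\<Sum>a\<in>A. card {b\<in>B. \<not> E a b} choose t) = (\<Sum>a\<in>A. card {T\<in>Ts. \<forall>b\<in>T. \<not> E a b})"
    using eq1 by simp
  also have "\<dots> = (\<Sum>T\<in>Ts. card {a\<in>A. \<forall>b\<in>T. \<not> E a b})"
    by (rule double_count[OF finA finTs])
  also have "\<dots> \<le> (\<Sum>T\<in>Ts. t - 1)"
    using le1 by (intro sum_mono) auto
  also have "\<dots> = (t - 1) * (card B choose t)" using cTs by simp
  finally show ?thesis .
qed

lemma count_bound:
  fixes A B :: "'a set" and E :: "'a \<Rightarrow> 'a \<Rightarrow> bool" and t :: nat and \<mu> :: real
  assumes finA: "finite A" and finB: "finite B" and t: "t \<ge> 1"
    and nohole: "\<And>A' B'. A' \<subseteq> A \<Longrightarrow> B' \<subseteq> B \<Longrightarrow> card A' = t \<Longrightarrow> card B' = t \<Longrightarrow> \<exists>a\<in>A'. \<exists>b\<in>B'. E a b"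
    and mu: "\<mu> > 0" "real t \<le> \<mu> * card B"
    and miss: "\<And>a. a \<in> A \<Longrightarrow> \<mu> * card B \<le> card {b\<in>B. \<not> E a b}"
  shows "real (card A) \<le> (t - 1) * (t / \<mu>) ^ t"
proof (cases "A = {}")
  case True
  then show ?thesis using t mu by simp
next
  case False
  define N where "N = card B"
  have Npos: "N > 0"
  proof (rule ccontr)
    assume "\<not> N > 0"
    then have "N = 0" by simp
    then show False using mu t unfolding N_def by simp
  qed
  obtain a0 where a0: "a0 \<in> A" using False by blast
  have "card {b\<in>B. \<not> E a0 b} \<le> N" unfolding N_def using finB by (intro card_mono) auto
  then have "\<mu> * N \<le> N" using miss[OF a0] unfolding N_def by linarith
  then have tN: "t \<le> N" using mu unfolding N_def by linarith
  have lb: "(\<mu> * N / t) ^ t \<le> real (card {b\<in>B. \<not> E a b} choose t)" if a: "a \<in> A" for a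
  proof -
    define m where "m = card {b\<in>B. \<not> E a b}"
    have m1: "\<mu> * N \<le> m" using miss[OF a] unfolding m_def N_def by simp
    have "t \<le> m" using m1 mu unfolding N_def by linarith
    then have "(real m / real t) ^ t \<le> real (m choose t)" by (rule binomial_ge_n_over_k_pow_k)
    moreover have "(\<mu> * N / t) ^ t \<le> (real m / real t) ^ t"
      using m1 mu t by (intro power_mono divide_right_mono) auto
    ultimately show ?thesis unfolding m_def by linarith
  qed
  have "real (card A) * (\<mu> * N / t) ^ t = (\<Sum>a\<in>A. (\<mu> * N / t) ^ t)" by simp
  also have "\<dots> \<le> (\<Sum>a\<in>A. real (card {b\<in>B. \<not> E a b} choose t))"
    using lb by (intro sum_mono) auto
  also have "\<dots> = real (\<Sum>a\<in>A. card {b\<in>B. \<not> E a b} choose t)" by simp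
  also have "\<dots> \<le> real ((t - 1) * (N choose t))"
    using count_lemma[OF finA finB t nohole] unfolding N_def of_nat_le_iff by blast
  also have "\<dots> \<le> real (t - 1) * real N ^ t"
    using binomial_le_pow[OF tN] by (simp add: mult_left_mono flip: of_nat_power)
  finally have main: "real (card A) * (\<mu> * N / t) ^ t \<le> real (t - 1) * real N ^ t" .
  have "(\<mu> * N / t) ^ t = (\<mu> / t) ^ t * real N ^ t" by (simp add: power_mult_distrib field_simps)
  then have "real (card A) * (\<mu> / t) ^ t * real N ^ t \<le> real (t - 1) * real N ^ t" using main by (simp add: mult.assoc)
  then have "real (card A) * (\<mu> / t) ^ t \<le> real (t - 1)" using Npos by simp
  moreover have "(\<mu> / t) ^ t > 0" using mu t by simp
  ultimately have "real (card A) \<le> real (t - 1) / (\<mu> / t) ^ t" using pos_le_divide_eq by blast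
  also have "\<dots> = real (t - 1) * (t / \<mu>) ^ t" by (simp add: power_divide field_simps)
  finally show ?thesis using t by simp
qed

lemma hole_biclaw:
  assumes sg: "simple_graph V E"
    and xy: "x \<in> V" "y \<in> V" "E x y"
    and A: "A \<subseteq> V" "finite A" "card A = t" "\<forall>a\<in>A. E y a" "\<forall>a\<in>A. \<not> E x a" "x \<notin> A"
    and B: "B \<subseteq> V" "finite B" "card B = t" "\<forall>b\<in>B. E x b" "\<forall>b\<in>B. \<not> E y b" "y \<notin> B"
    and AA: "\<forall>a\<in>A. \<forall>a'\<in>A. \<not> E a a'"
    and BB: "\<forall>b\<in>B. \<forall>b'\<in>B. \<not> E b b'"
    and AB: "\<forall>a\<in>A. \<forall>b\<in>B. \<not> E a b"
  shows "has_induced_copy V E (biclaw_verts t t) biclaw_edge"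
proof -
  have sym: "\<And>u v. E u v \<Longrightarrow> E v u" and irr: "\<And>v. \<not> E v v"
    using sg unfolding simple_graph_def by auto
  obtain ha where ha: "bij_betw ha {1..t} A" using ex_bij_betw_nat_finite_1[OF A(2)] A(3) by auto
  obtain hb where hb: "bij_betw hb {1..t} B" using ex_bij_betw_nat_finite_1[OF B(2)] B(3) by auto
  have haA: "\<And>i. i \<in> {1..t} \<Longrightarrow> ha i \<in> A" using ha bij_betwE by blast
  have hbB: "\<And>i. i \<in> {1..t} \<Longrightarrow> hb i \<in> B" using hb bij_betwE by blast
  have hainj: "\<And>i j. i \<in> {1..t} \<Longrightarrow> j \<in> {1..t} \<Longrightarrow> ha i = ha j \<Longrightarrow> i = j"
    using ha unfolding bij_betw_def inj_on_def by blast
  have hbinj: "\<And>i j. i \<in> {1..t} \<Longrightarrow> j \<in> {1..t} \<Longrightarrow> hb i = hb j \<Longrightarrow> i = j"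
    using hb unfolding bij_betw_def inj_on_def by blast
  have xny: "x \<noteq> y" using xy irr by auto
  have yA: "y \<notin> A" using A(4) irr by auto
  have xB: "x \<notin> B" using B(4) irr by auto
  have AB': "\<And>a. a \<in> A \<Longrightarrow> a \<notin> B" using A(4) B(5) by auto
  define f where "f = (\<lambda>v. case v of BX \<Rightarrow> x | BY \<Rightarrow> y | BXi i \<Rightarrow> ha i | BYi j \<Rightarrow> hb j)"
  have memW: "\<And>v. v \<in> biclaw_verts t t \<longleftrightarrow> (v = BX \<or> v = BY \<or> (\<exists>i\<in>{1..t}. v = BXi i) \<or> (\<exists>i\<in>{1..t}. v = BYi i))"
    unfolding biclaw_verts_def by auto
  have fW: "\<And>v. v \<in> biclaw_verts t t \<Longrightarrow> (v = BX \<and> f v = x) \<or> (v = BY \<and> f v = y) \<or>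
      (\<exists>i\<in>{1..t}. v = BXi i \<and> f v = ha i) \<or> (\<exists>i\<in>{1..t}. v = BYi i \<and> f v = hb i)"
    unfolding memW f_def by auto
  have inj: "inj_on f (biclaw_verts t t)"
  proof (rule inj_onI)
    fix u v assume u: "u \<in> biclaw_verts t t" and v: "v \<in> biclaw_verts t t" and e: "f u = f v"
    have d1: "\<And>i. i \<in> {1..t} \<Longrightarrow> ha i \<noteq> x \<and> ha i \<noteq> y" using haA A(6) yA by blast
    have d2: "\<And>i. i \<in> {1..t} \<Longrightarrow> hb i \<noteq> x \<and> hb i \<noteq> y" using hbB B(6) xB by blast
    have d3: "\<And>i j. i \<in> {1..t} \<Longrightarrow> j \<in> {1..t} \<Longrightarrow> ha i \<noteq> hb j \<and> hb j \<noteq> ha i" by (metis AB' haA hbB)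
    show "u = v" using fW[OF u] fW[OF v] e
      apply (elim disjE bexE conjE)
      using xny d1 d2 d3 by (auto intro: hainj hbinj)
  qed
  have img: "f ` biclaw_verts t t \<subseteq> V"
  proof
    fix w assume "w \<in> f ` biclaw_verts t t"
    then obtain v where v: "v \<in> biclaw_verts t t" "w = f v" by blast
    have "f v \<in> V" using fW[OF v(1)]
      apply (elim disjE bexE conjE)
      using xy A(1) B(1) haA hbB by auto
    then show "w \<in> V" using v(2) by simp
  qed
  have edges: "\<forall>u\<in>biclaw_verts t t. \<forall>v\<in>biclaw_verts t t. E (f u) (f v) \<longleftrightarrow> biclaw_edge u v"
  proof (intro ballI)
    fix u v assume u: "u \<in> biclaw_verts t t" and v: "v \<in> biclaw_verts t t"
    have x1: "\<And>i. i \<in> {1..t} \<Longrightarrow> E y (ha i) \<and> E (ha i) y \<and> \<not> E x (ha i) \<and> \<not> E (ha i) x"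
      using haA A(4,5) sym by blast
    have x2: "\<And>i. i \<in> {1..t} \<Longrightarrow> E x (hb i) \<and> E (hb i) x \<and> \<not> E y (hb i) \<and> \<not> E (hb i) y"
      using hbB B(4,5) sym by blast
    have x3: "\<And>i j. i \<in> {1..t} \<Longrightarrow> j \<in> {1..t} \<Longrightarrow> \<not> E (ha i) (ha j) \<and> \<not> E (hb i) (hb j) \<and> \<not> E (ha i) (hb j) \<and> \<not> E (hb j) (ha i)"
    proof -
      fix i j assume i: "i \<in> {1..t}" and j: "j \<in> {1..t}"
      have a: "ha i \<in> A" "ha j \<in> A" using haA i j by auto
      have b: "hb i \<in> B" "hb j \<in> B" using hbB i j by auto
      have "\<not> E (ha i) (hb j)" using AB a b by blast
      moreover then have "\<not> E (hb j) (ha i)" using sym by blast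
      ultimately show "\<not> E (ha i) (ha j) \<and> \<not> E (hb i) (hb j) \<and> \<not> E (ha i) (hb j) \<and> \<not> E (hb j) (ha i)"
        using AA BB a b by blast
    qed
    have x4: "E x y \<and> E y x \<and> \<not> E x x \<and> \<not> E y y" using xy sym irr by blast
    show "E (f u) (f v) \<longleftrightarrow> biclaw_edge u v" using fW[OF u] fW[OF v]
      apply (elim disjE bexE conjE)
      using x1 x2 x3 x4 by simp_all
  qed
  show ?thesis unfolding has_induced_copy_def using inj img edges by blast
qed


definition nb :: "nat set \<Rightarrow> (nat \<Rightarrow> nat \<Rightarrow> bool) \<Rightarrow> nat \<Rightarrow> nat set" where
  "nb V E v = {u \<in> V. E v u}"

definition Kc :: "nat \<Rightarrow> real \<Rightarrow> real" where
  "Kc t eps = real (t - 1) * (8 * real t / eps) ^ t"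

locale bgraph =
  fixes V :: "nat set" and E :: "nat \<Rightarrow> nat \<Rightarrow> bool" and X Y :: "nat set" and t :: nat
    and eps D :: real
  assumes sg: "simple_graph V E" and bp: "bipartition V E X Y" and conn: "connected_graph V E"
    and free: "induced_biclaw_free V E t" and t1: "t \<ge> 1" and eps: "0 < eps" "eps < 1"
    and mindeg: "\<And>v. v \<in> V \<Longrightarrow> D \<le> real (degree V E v)"
    and Dbig: "64 * (real t + Kc t eps + 2) / eps \<le> D"
begin

abbreviation N where "N v \<equiv> nb V E v"
abbreviation K where "K \<equiv> Kc t eps"

lemma finV: "finite V" using sg unfolding simple_graph_def by auto
lemma symE: "E u v \<Longrightarrow> E v u" using sg unfolding simple_graph_def by auto
lemma irrE: "\<not> E v v" using sg unfolding simple_graph_def by auto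
lemma XV: "X \<subseteq> V" and YV: "Y \<subseteq> V" and XY: "X \<inter> Y = {}" and XYV: "X \<union> Y = V"
  using bp unfolding bipartition_def by auto
lemma noXX: "u \<in> X \<Longrightarrow> v \<in> X \<Longrightarrow> \<not> E u v" and noYY: "u \<in> Y \<Longrightarrow> v \<in> Y \<Longrightarrow> \<not> E u v"
  using bp unfolding bipartition_def by auto
lemma finX: "finite X" and finY: "finite Y" using XV YV finV finite_subset by auto
lemma finN: "finite (N v)" unfolding nb_def using finV by simp
lemma NV: "N v \<subseteq> V" unfolding nb_def by auto
lemma NX: "x \<in> X \<Longrightarrow> N x \<subseteq> Y" unfolding nb_def using noXX XYV by auto
lemma NY: "y \<in> Y \<Longrightarrow> N y \<subseteq> X" unfolding nb_def using noYY XYV by auto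
lemma memN: "u \<in> N v \<longleftrightarrow> u \<in> V \<and> E v u" unfolding nb_def by auto
lemma Nsym: "v \<in> V \<Longrightarrow> u \<in> N v \<Longrightarrow> v \<in> N u" unfolding nb_def using symE by auto
lemma degN: "degree V E v = card (N v)" unfolding degree_def nb_def by simp

lemma K_nonneg: "K \<ge> 0" unfolding Kc_def using eps by simp
lemma Dge: "D \<ge> 64 * (real t + K + 2)"
proof -
  have c0: "64 * (real t + K + 2) \<ge> 0" using K_nonneg by simp
  have "64 * (real t + K + 2) * eps \<le> 64 * (real t + K + 2)"
    using eps c0 by (intro mult_left_le) auto
  then have "64 * (real t + K + 2) \<le> 64 * (real t + K + 2) / eps"
    using eps by (simp add: le_divide_eq)
  then show ?thesis using Dbig by linarith
qed
lemma Dge2: "D * eps \<ge> 64 * (real t + K + 2)"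
  using Dbig eps by (simp add: field_simps)

lemma degD: "v \<in> V \<Longrightarrow> D \<le> real (card (N v))" using mindeg degN by simp

lemma nohole:
  assumes x: "x \<in> X" and y: "y \<in> Y" and xy: "E x y"
    and A: "A' \<subseteq> N y - {x}" "t \<le> card A'" and B: "B' \<subseteq> N x - {y}" "t \<le> card B'"
  shows "\<exists>a\<in>A'. \<exists>b\<in>B'. E a b"
proof (rule ccontr)
  assume no: "\<not> ?thesis"
  obtain A0 where A0: "A0 \<subseteq> A'" "card A0 = t" "finite A0" using obtain_subset_with_card_n[OF A(2)] by blast
  obtain B0 where B0: "B0 \<subseteq> B'" "card B0 = t" "finite B0" using obtain_subset_with_card_n[OF B(2)] by blast
  have AX: "A0 \<subseteq> X" using A0(1) A(1) NY[OF y] by blast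
  have BY: "B0 \<subseteq> Y" using B0(1) B(1) NX[OF x] by blast
  have "has_induced_copy V E (biclaw_verts t t) biclaw_edge"
  proof (rule hole_biclaw[OF sg])
    show "x \<in> V" "y \<in> V" "E x y" using x y xy XV YV by auto
    show "A0 \<subseteq> V" "finite A0" "card A0 = t" using AX XV A0 by auto
    show "\<forall>a\<in>A0. E y a" using A0(1) A(1) memN by blast
    show "\<forall>a\<in>A0. \<not> E x a" using AX x noXX by blast
    show "x \<notin> A0" using A0(1) A(1) by blast
    show "B0 \<subseteq> V" "finite B0" "card B0 = t" using BY YV B0 by auto
    show "\<forall>b\<in>B0. E x b" using B0(1) B(1) memN by blast
    show "\<forall>b\<in>B0. \<not> E y b" using BY y noYY by blast
    show "y \<notin> B0" using B0(1) B(1) by blast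
    show "\<forall>a\<in>A0. \<forall>a'\<in>A0. \<not> E a a'" using AX noXX by blast
    show "\<forall>b\<in>B0. \<forall>b'\<in>B0. \<not> E b b'" using BY noYY by blast
    show "\<forall>a\<in>A0. \<forall>b\<in>B0. \<not> E a b" using no A0(1) B0(1) by blast
  qed
  then show False using free unfolding induced_biclaw_free_def by blast
qed

lemma few_bad:
  assumes x: "x \<in> X" and y: "y \<in> Y" and xy: "E x y"
    and S: "S \<subseteq> N y - {x}"
    and bad: "\<And>a. a \<in> S \<Longrightarrow> eps / 8 * real (card (N x - {y})) \<le> real (card ((N x - {y}) - N a))"
  shows "real (card S) \<le> K"
proof -
  have yV: "y \<in> V" using y YV by auto
  have yN: "y \<in> N x" using xy yV memN by auto
  have cB: "card (N x - {y}) = card (N x) - 1" using yN finN by simp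
  have xV: "x \<in> V" using x XV by auto
  have "D \<le> real (card (N x))" using degD[OF xV] .
  moreover have "card (N x) > 0" using yN finN card_gt_0_iff by blast
  ultimately have "real (card (N x - {y})) \<ge> D - 1" using cB by (simp add: of_nat_diff)
  moreover have "eps / 8 * (D - 1) \<ge> real t"
  proof -
    have "eps / 8 * (D - 1) = D * eps / 8 - eps / 8" by (simp add: field_simps)
    also have "\<dots> \<ge> 8 * (real t + K + 2) - 1" using Dge2 eps by simp
    finally have h: "8 * (real t + K + 2) - 1 \<le> eps / 8 * (D - 1)" .
    have "real t \<le> 8 * (real t + K + 2) - 1" using K_nonneg by simp
    then show ?thesis using h by linarith
  qed
  ultimately have mu: "real t \<le> eps / 8 * real (card (N x - {y}))"
  proof -
    assume a1: "real (card (N x - {y})) \<ge> D - 1" and a2: "eps / 8 * (D - 1) \<ge> real t"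
    have "eps / 8 * (D - 1) \<le> eps / 8 * real (card (N x - {y}))"
      using a1 eps by (intro mult_left_mono) auto
    then show ?thesis using a2 by linarith
  qed
  have finS: "finite S" using S finN finite_subset by blast
  have "real (card S) \<le> real (t - 1) * (real t / (eps / 8)) ^ t"
  proof (rule count_bound[where E = E and B = "N x - {y}"])
    show "finite S" by (rule finS)
    show "finite (N x - {y})" using finN by simp
    show "t \<ge> 1" using t1 .
    show "eps / 8 > 0" using eps by simp
    show "real t \<le> eps / 8 * real (card (N x - {y}))" by (rule mu)
    fix a assume a: "a \<in> S"
    have "{b \<in> N x - {y}. \<not> E a b} = (N x - {y}) - N a" unfolding nb_def by auto
    then show "eps / 8 * real (card (N x - {y})) \<le> real (card {b \<in> N x - {y}. \<not> E a b})"
      using bad[OF a] by simp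
  next
    fix A' B' assume "A' \<subseteq> S" "B' \<subseteq> N x - {y}" "card A' = t" "card B' = t"
    then show "\<exists>a\<in>A'. \<exists>b\<in>B'. E a b" using nohole[OF x y xy, of A' B'] S by auto
  qed
  also have "\<dots> = K" unfolding Kc_def by (simp add: field_simps)
  finally show ?thesis .
qed


lemma card_split: "finite Q \<Longrightarrow> card Q = card (Q \<inter> P) + card (Q - P)"
  by (metis Diff_Diff_Int Int_lower1 card_Diff_subset_Int card_mono finite_Int le_add_diff_inverse Diff_subset inf_commute card_Diff_subset finite_Diff)

lemma card_cover: "finite B \<Longrightarrow> finite C \<Longrightarrow> A \<subseteq> B \<union> C \<Longrightarrow> card A \<le> card B + card C"
  by (meson card_Un_le card_mono finite_UnI le_trans)

lemma card_Diff_ge: "finite A \<Longrightarrow> finite B \<Longrightarrow> real (card A) - real (card B) \<le> real (card (A - B))"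
proof -
  assume fA: "finite A" and fB: "finite B"
  have "card (A \<inter> B) \<le> card B" using fB by (intro card_mono) auto
  then have "card A \<le> card (A - B) + card B" using card_split[OF fA, of B] by simp
  then show ?thesis by linarith
qed

lemma Xne: "X \<noteq> {}"
proof -
  have "V \<noteq> {}" using conn unfolding connected_graph_def by auto
  then obtain v where v: "v \<in> V" by blast
  have "D > 0" using Dge K_nonneg by simp
  then have "card (N v) > 0" using degD[OF v] by linarith
  then obtain u where u: "u \<in> N v" by (metis card_gt_0_iff ex_in_conv)
  show ?thesis
  proof (cases "v \<in> X")
    case False
    then have "v \<in> Y" using v XYV by blast
    then show ?thesis using u NY by blast
  qed blast
qed

abbreviation Dl where "Dl \<equiv> max_degree_in V E X"

lemma Dl_ge: "x \<in> X \<Longrightarrow> card (N x) \<le> Dl"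
  unfolding max_degree_in_def using finX by (metis Max_ge degN finite_imageI imageI)

lemma Dl_in: "\<exists>x\<in>X. card (N x) = Dl"
proof -
  have "Dl \<in> degree V E ` X" unfolding max_degree_in_def using finX Xne by (intro Max_in) auto
  then show ?thesis using degN by auto
qed

definition xs where "xs = (SOME x. x \<in> X \<and> card (N x) = Dl)"
lemma xs: "xs \<in> X" "card (N xs) = Dl"
  using someI_ex[OF Dl_in[unfolded Bex_def]] unfolding xs_def by auto

abbreviation R where "R \<equiv> N xs"

lemma Dl_D: "real Dl \<ge> D" using degD[of xs] xs XV by auto

lemma epsDl: "eps * real Dl \<ge> 64 * (real t + K + 2)"
proof -
  have "eps * D \<le> eps * real Dl" using Dl_D eps by (intro mult_left_mono) auto
  then show ?thesis using Dge2 by (simp add: mult.commute)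
qed

definition rich where "rich w \<longleftrightarrow> real (card (N w \<inter> R)) \<ge> (1 - eps / 2) * real Dl"

definition Y3 where "Y3 = {p \<in> Y. \<exists>x\<in>N p. N x \<inter> R \<noteq> {}}"

lemma find_b:
  assumes x: "x \<in> X" and z: "z \<in> N x"
    and A: "Aset \<subseteq> V" "finite Aset" "Aset \<noteq> {}"
    and hA: "\<And>a. a \<in> Aset \<Longrightarrow> real (card ((N x - {z}) - N a)) < eps / 8 * real (card (N x - {z}))"
    and hw: "real (card ((N x - {q}) - N w)) < eps / 8 * real (card (N x - {z}))"
    and beta: "real (card (N x - {z})) \<ge> 4"
  shows "\<exists>b \<in> (N x \<inter> N w) - {z}. real (card (N b \<inter> Aset)) \<ge> real (card Aset) / 2"
proof (rule ccontr)
  assume no: "\<not> ?thesis"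
  define Bz where "Bz = N x - {z}"
  define Bw where "Bw = (N x \<inter> N w) - {z}"
  define \<beta> where "\<beta> = real (card Bz)"
  have finBz: "finite Bz" unfolding Bz_def using finN by simp
  have finBw: "finite Bw" unfolding Bw_def using finN by simp
  have BwBz: "Bw \<subseteq> Bz" unfolding Bw_def Bz_def by auto
  have cBw: "real (card Bw) \<le> \<beta>" unfolding \<beta>_def using card_mono[OF finBz BwBz] by simp
  have cw: "real (card (Bz - N w)) \<le> real (card ((N x - {q}) - N w)) + 1"
  proof -
    have "Bz - N w \<subseteq> insert q ((N x - {q}) - N w)" unfolding Bz_def by auto
    then have "card (Bz - N w) \<le> card (insert q ((N x - {q}) - N w))"
      using finN by (intro card_mono) auto
    also have "\<dots> \<le> Suc (card ((N x - {q}) - N w))" by (rule card_insert_le_m1) auto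
    finally show ?thesis by simp
  qed
  have each: "real (card (N a \<inter> Bw)) \<ge> \<beta> / 2" if a: "a \<in> Aset" for a
  proof -
    have "Bz \<inter> N a \<subseteq> (N a \<inter> Bw) \<union> (Bz - N w)" unfolding Bz_def Bw_def by auto
    then have "card (Bz \<inter> N a) \<le> card (N a \<inter> Bw) + card (Bz - N w)"
      using finBz finBw by (intro card_cover) auto
    moreover have "card Bz = card (Bz \<inter> N a) + card (Bz - N a)" using card_split[OF finBz] .
    ultimately have "\<beta> \<le> real (card (N a \<inter> Bw)) + real (card (Bz - N w)) + real (card (Bz - N a))"
      unfolding \<beta>_def by linarith
    moreover have "real (card (Bz - N a)) < eps / 8 * \<beta>" using hA[OF a] unfolding Bz_def \<beta>_def by simp
    moreover have "real (card (Bz - N w)) < eps / 8 * \<beta> + 1" using cw hw unfolding Bz_def \<beta>_def by simp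
    moreover have "eps / 8 * \<beta> \<le> \<beta> / 8" using eps beta unfolding \<beta>_def Bz_def by (simp add: mult_right_le_one_le)
    moreover have "\<beta> \<ge> 4" using beta unfolding \<beta>_def Bz_def .
    ultimately show ?thesis by linarith
  qed
  have eqsum: "(\<Sum>a\<in>Aset. card {b\<in>Bw. b \<in> N a}) = (\<Sum>b\<in>Bw. card {a\<in>Aset. b \<in> N a})"
    by (rule double_count[OF A(2) finBw])
  have e1: "{b\<in>Bw. b \<in> N a} = N a \<inter> Bw" for a by blast
  have e2: "{a\<in>Aset. b \<in> N a} = N b \<inter> Aset" if b: "b \<in> Bw" for b
  proof (intro equalityI subsetI)
    have bV: "b \<in> V" using b NV unfolding Bw_def by blast
    fix a
    { assume "a \<in> {a\<in>Aset. b \<in> N a}"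
      then have "a \<in> Aset" "b \<in> N a" by auto
      then show "a \<in> N b \<inter> Aset" using A(1) Nsym by blast }
    { assume "a \<in> N b \<inter> Aset"
      then have "a \<in> Aset" "a \<in> N b" by auto
      then show "a \<in> {a\<in>Aset. b \<in> N a}" using bV Nsym by blast }
  qed
  have natEq: "(\<Sum>a\<in>Aset. card (N a \<inter> Bw)) = (\<Sum>b\<in>Bw. card (N b \<inter> Aset))"
  proof -
    have "(\<Sum>a\<in>Aset. card (N a \<inter> Bw)) = (\<Sum>a\<in>Aset. card {b\<in>Bw. b \<in> N a})" by (simp only: e1)
    also have "\<dots> = (\<Sum>b\<in>Bw. card {a\<in>Aset. b \<in> N a})" by (rule eqsum)
    also have "\<dots> = (\<Sum>b\<in>Bw. card (N b \<inter> Aset))" by (rule sum.cong) (simp_all only: e2)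
    finally show ?thesis .
  qed
  have "real (\<Sum>a\<in>Aset. card (N a \<inter> Bw)) = real (\<Sum>b\<in>Bw. card (N b \<inter> Aset))" using natEq by (rule arg_cong)
  then have "(\<Sum>a\<in>Aset. real (card (N a \<inter> Bw))) = (\<Sum>b\<in>Bw. real (card (N b \<inter> Aset)))" by simp
  moreover have "(\<Sum>a\<in>Aset. real (card (N a \<inter> Bw))) \<ge> real (card Aset) * (\<beta> / 2)"
  proof -
    have "(\<Sum>a\<in>Aset. \<beta> / 2) \<le> (\<Sum>a\<in>Aset. real (card (N a \<inter> Bw)))" by (rule sum_mono) (rule each)
    moreover have "(\<Sum>a\<in>Aset. \<beta> / 2) = real (card Aset) * (\<beta> / 2)" by (rule sum_constant)
    ultimately show ?thesis by linarith
  qed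
  moreover have "(\<Sum>b\<in>Bw. real (card (N b \<inter> Aset))) < real (card Aset) * (\<beta> / 2)"
  proof (cases "Bw = {}")
    case True
    have "card Aset > 0" using A(2) A(3) card_gt_0_iff by blast
    then have "real (card Aset) > 0" by simp
    moreover have "\<beta> > 0" using beta unfolding \<beta>_def Bz_def by simp
    ultimately have "real (card Aset) * (\<beta> / 2) > 0" by (intro mult_pos_pos) auto
    moreover have "(\<Sum>b\<in>Bw. real (card (N b \<inter> Aset))) = 0" using True by (simp only: sum.empty)
    ultimately show ?thesis by linarith
  next
    case False
    have noB: "real (card (N b \<inter> Aset)) < real (card Aset) / 2" if b: "b \<in> Bw" for b
    proof -
      have "b \<in> (N x \<inter> N w) - {z}" using b unfolding Bw_def .
      then show ?thesis using no by (simp add: not_le)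
    qed
    have "(\<Sum>b\<in>Bw. real (card (N b \<inter> Aset))) < (\<Sum>b\<in>Bw. real (card Aset) / 2)"
      by (rule sum_strict_mono[OF finBw False]) (rule noB)
    also have "\<dots> = real (card Bw) * (real (card Aset) / 2)" by (rule sum_constant)
    also have "\<dots> \<le> \<beta> * (real (card Aset) / 2)" using cBw by (intro mult_right_mono) auto
    also have "\<dots> = real (card Aset) * (\<beta> / 2)" by (simp only: times_divide_eq_right mult.commute)
    finally show ?thesis .
  qed
  ultimately show False by linarith
qed


lemma card_two: "card {a, b} \<le> 2"
  by (cases "a = b") simp_all

lemma card_minus_one: "u \<in> A \<Longrightarrow> finite A \<Longrightarrow> real (card (A - {u})) = real (card A) - 1"
proof -
  assume "u \<in> A" "finite A"
  then have "card (A - {u}) = card A - 1" "card A > 0" using card_gt_0_iff by auto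
  then show ?thesis by (simp add: of_nat_diff)
qed

lemma degV: "v \<in> V \<Longrightarrow> real (card (N v)) \<ge> 64 * (real t + K + 2)"
  using degD Dge by fastforce

lemma rich_many:
  assumes p: "p \<in> Y3"
  shows "real (card {w \<in> N p. rich w}) > K"
proof -
  from p obtain x r where pY: "p \<in> Y" and x: "x \<in> N p" and r: "r \<in> N x" and rR: "r \<in> R"
    unfolding Y3_def by blast
  have xX: "x \<in> X" using NY pY x by blast
  have rY: "r \<in> Y" using NX xX r by blast
  have xsX: "xs \<in> X" using xs by simp
  have pV: "p \<in> V" and xV: "x \<in> V" and rV: "r \<in> V" and xsV: "xs \<in> V"
    using pY xX rY xsX XV YV by auto
  have Exr: "E x r" using r memN by blast
  have Exsr: "E xs r" using rR memN by blast
  have pNx: "p \<in> N x" using Nsym[OF pV x] .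
  have Exp: "E x p" using pNx memN by blast
  have K0: "K \<ge> 0" by (rule K_nonneg)
  have t0: "real t \<ge> 0" by simp
  have dr: "real (card (N r)) \<ge> 64 * (real t + K + 2)" using degV[OF rV] .
  have dp: "real (card (N p)) \<ge> 64 * (real t + K + 2)" using degV[OF pV] .
  have dx: "real (card (N x)) \<ge> 64 * (real t + K + 2)" using degV[OF xV] .
  have eD: "eps * real Dl \<ge> 64 * (real t + K + 2)" by (rule epsDl)
  have Dl1: "real Dl \<ge> 64 * (real t + K + 2)" using Dl_D Dge by (linarith | argo)
  define S1 where "S1 = {a \<in> N r - {xs}. eps / 8 * real (card (N xs - {r})) \<le> real (card ((N xs - {r}) - N a))}"
  have cS1: "real (card S1) \<le> K" by (rule few_bad[OF xsX rY Exsr]) (auto simp: S1_def)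
  define S2 where "S2 = {a \<in> N r - {x}. eps / 8 * real (card (N x - {r})) \<le> real (card ((N x - {r}) - N a))}"
  have cS2: "real (card S2) \<le> K" by (rule few_bad[OF xX rY Exr]) (auto simp: S2_def)
  define W0 where "W0 = N r - {xs, x} - S1 - S2"
  have finS1: "finite S1" unfolding S1_def using finN by simp
  have finS2: "finite S2" unfolding S2_def using finN by simp
  have c2: "real (card (N r - {xs, x})) \<ge> real (card (N r)) - 2"
  proof -
    have "real (card (N r - {xs, x})) \<ge> real (card (N r)) - real (card {xs, x})"
      using card_Diff_ge[OF finN, of "{xs, x}"] by simp
    moreover have "real (card {xs, x}) \<le> 2" using card_two[of xs x] by simp
    ultimately show ?thesis by (linarith | argo)
  qed
  moreover have "real (card (N r - {xs, x} - S1)) \<ge> real (card (N r - {xs, x})) - real (card S1)"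
    using card_Diff_ge[OF _ finS1, of "N r - {xs, x}"] finN by simp
  moreover have "real (card W0) \<ge> real (card (N r - {xs, x} - S1)) - real (card S2)"
    unfolding W0_def using card_Diff_ge[OF _ finS2, of "N r - {xs, x} - S1"] finN by simp
  ultimately have "real (card W0) > 0" using cS1 cS2 dr K0 t0 by (linarith | argo)
  then have "W0 \<noteq> {}" by (metis card.empty of_nat_0 less_irrefl)
  then obtain w where w: "w \<in> W0" by blast
  have wNr: "w \<in> N r" and wxs: "w \<noteq> xs" and wx: "w \<noteq> x" and wS1: "w \<notin> S1" and wS2: "w \<notin> S2"
    using w unfolding W0_def by auto
  have wX: "w \<in> X" using NY rY wNr by blast
  have h1: "real (card ((N xs - {r}) - N w)) < eps / 8 * real (card (N xs - {r}))"
  proof -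
    have "\<not> (eps / 8 * real (card (N xs - {r})) \<le> real (card ((N xs - {r}) - N w)))"
      using wS1 wNr wxs unfolding S1_def by blast
    then show ?thesis by (linarith | argo)
  qed
  have h2: "real (card ((N x - {r}) - N w)) < eps / 8 * real (card (N x - {r}))"
  proof -
    have "\<not> (eps / 8 * real (card (N x - {r})) \<le> real (card ((N x - {r}) - N w)))"
      using wS2 wNr wx unfolding S2_def by blast
    then show ?thesis by (linarith | argo)
  qed
  have cxsr: "real (card (N xs - {r})) = real Dl - 1" using card_minus_one[OF rR finN] xs(2) by simp
  have wR: "real (card (N w \<inter> R)) > (1 - eps / 8) * (real Dl - 1)"
  proof -
    have fin: "finite (N xs - {r})" using finN by simp
    have "card (N xs - {r}) = card ((N xs - {r}) \<inter> N w) + card ((N xs - {r}) - N w)"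
      by (rule card_split[OF fin])
    moreover have "card ((N xs - {r}) \<inter> N w) \<le> card (N w \<inter> R)"
      using finN by (intro card_mono) auto
    ultimately have "real (card (N w \<inter> R)) \<ge> real (card (N xs - {r})) - real (card ((N xs - {r}) - N w))"
      by (linarith | argo)
    moreover have "(1 - eps / 8) * (real Dl - 1) = (real Dl - 1) - eps / 8 * (real Dl - 1)"
      by (simp add: algebra_simps)
    moreover have "real (card ((N xs - {r}) - N w)) < eps / 8 * (real Dl - 1)" using h1 cxsr by simp
    ultimately show ?thesis using cxsr by (linarith | argo)
  qed
  define S3 where "S3 = {a \<in> N p - {x}. eps / 8 * real (card (N x - {p})) \<le> real (card ((N x - {p}) - N a))}"
  have cS3: "real (card S3) \<le> K" by (rule few_bad[OF xX pY Exp]) (auto simp: S3_def)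
  have finS3: "finite S3" unfolding S3_def using finN by simp
  define Ap where "Ap = N p - {x} - S3"
  have cAp: "real (card Ap) \<ge> real (card (N p)) - 1 - K"
  proof -
    have "real (card (N p - {x})) = real (card (N p)) - 1" using card_minus_one[OF x finN] .
    moreover have "real (card Ap) \<ge> real (card (N p - {x})) - real (card S3)"
      unfolding Ap_def using card_Diff_ge[OF _ finS3, of "N p - {x}"] finN by simp
    ultimately show ?thesis using cS3 by (linarith | argo)
  qed
  have finAp: "finite Ap" unfolding Ap_def using finN by simp
  have ApV: "Ap \<subseteq> V" unfolding Ap_def using NV by blast
  have Apne: "Ap \<noteq> {}"
  proof
    assume "Ap = {}"
    then show False using cAp dp K0 t0 by simp
  qed
  have hA: "real (card ((N x - {p}) - N a)) < eps / 8 * real (card (N x - {p}))" if a: "a \<in> Ap" for a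
  proof -
    have "\<not> (eps / 8 * real (card (N x - {p})) \<le> real (card ((N x - {p}) - N a)))"
      using a unfolding Ap_def S3_def by blast
    then show ?thesis by (linarith | argo)
  qed
  have cxp: "real (card (N x - {p})) = real (card (N x)) - 1" using card_minus_one[OF pNx finN] .
  have cxr: "real (card (N x - {r})) = real (card (N x)) - 1" using card_minus_one[OF r finN] .
  have hw: "real (card ((N x - {r}) - N w)) < eps / 8 * real (card (N x - {p}))"
    using h2 cxp cxr by simp
  have beta: "real (card (N x - {p})) \<ge> 4" using cxp dx K0 t0 by (linarith | argo)
  obtain b where b: "b \<in> (N x \<inter> N w) - {p}" and cb: "real (card (N b \<inter> Ap)) \<ge> real (card Ap) / 2"
    using find_b[OF xX pNx ApV finAp Apne hA hw beta] by blast
  have bY: "b \<in> Y" using b NX xX by blast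
  have bNw: "b \<in> N w" using b by blast
  have Ewb: "E w b" using bNw memN by blast
  define S4 where "S4 = {a \<in> N b - {w}. eps / 8 * real (card (N w - {b})) \<le> real (card ((N w - {b}) - N a))}"
  have cS4: "real (card S4) \<le> K" by (rule few_bad[OF wX bY Ewb]) (auto simp: S4_def)
  have finS4: "finite S4" unfolding S4_def using finN by simp
  define A2 where "A2 = (N b \<inter> Ap) - {w} - S4"
  have cA2: "real (card A2) \<ge> real (card (N b \<inter> Ap)) - 1 - K"
  proof -
    have f1: "finite (N b \<inter> Ap)" using finAp by simp
    have "real (card ((N b \<inter> Ap) - {w})) \<ge> real (card (N b \<inter> Ap)) - real (card {w})"
      using card_Diff_ge[OF f1, of "{w}"] by simp
    moreover have "real (card A2) \<ge> real (card ((N b \<inter> Ap) - {w})) - real (card S4)"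
      unfolding A2_def using card_Diff_ge[OF _ finS4, of "(N b \<inter> Ap) - {w}"] f1 by simp
    ultimately show ?thesis using cS4 by simp
  qed
  have cNw: "real (card (N w - {b})) \<le> real Dl"
  proof -
    have "card (N w - {b}) \<le> card (N w)" using finN by (intro card_mono) auto
    then show ?thesis using Dl_ge[OF wX] by (linarith | argo)
  qed
  have A2rich: "A2 \<subseteq> {w \<in> N p. rich w}"
  proof
    fix a assume a: "a \<in> A2"
    have aNp: "a \<in> N p" using a unfolding A2_def Ap_def by blast
    have h4: "real (card ((N w - {b}) - N a)) < eps / 8 * real (card (N w - {b}))"
    proof -
      have "a \<in> N b - {w}" "a \<notin> S4" using a unfolding A2_def by auto
      then have "\<not> (eps / 8 * real (card (N w - {b})) \<le> real (card ((N w - {b}) - N a)))"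
        unfolding S4_def by blast
      then show ?thesis by (linarith | argo)
    qed
    have "(N w \<inter> R) - {b} \<subseteq> (N a \<inter> R) \<union> ((N w - {b}) - N a)" by blast
    then have "card ((N w \<inter> R) - {b}) \<le> card (N a \<inter> R) + card ((N w - {b}) - N a)"
      using finN by (intro card_cover) auto
    moreover have "real (card ((N w \<inter> R) - {b})) \<ge> real (card (N w \<inter> R)) - 1"
    proof -
      have "finite (N w \<inter> R)" using finN by simp
      then show ?thesis using card_Diff_ge[of "N w \<inter> R" "{b}"] by simp
    qed
    ultimately have "real (card (N a \<inter> R)) \<ge> real (card (N w \<inter> R)) - 1 - real (card ((N w - {b}) - N a))"
      by (linarith | argo)
    moreover have "eps / 8 * real (card (N w - {b})) \<le> eps / 8 * real Dl"
      using cNw eps by (intro mult_left_mono) auto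
    moreover have "(1 - eps / 8) * (real Dl - 1) = real Dl - eps / 8 * real Dl - 1 + eps / 8"
      by (simp add: field_simps)
    moreover have "(1 - eps / 2) * real Dl = real Dl - eps / 2 * real Dl" by (simp add: algebra_simps)
    moreover have "eps / 8 * real Dl = (eps * real Dl) / 8" "eps / 2 * real Dl = (eps * real Dl) / 2" by simp_all
    moreover have "eps > 0" using eps by simp
    ultimately have "real (card (N a \<inter> R)) \<ge> (1 - eps / 2) * real Dl"
      using h4 wR eD K0 t0 by (linarith | argo)
    then show "a \<in> {w \<in> N p. rich w}" using aNp unfolding rich_def by simp
  qed
  have "real (card A2) > K" using cA2 cb cAp dp K0 t0 by (linarith | argo)
  moreover have "card A2 \<le> card {w \<in> N p. rich w}"
    using A2rich finN by (intro card_mono) auto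
  ultimately show ?thesis by (linarith | argo)
qed


lemma no_triple:
  assumes yY: "y \<in> Y" and yn: "y \<notin> Y3" and xX: "x \<in> X" and xy: "x \<in> N y"
    and p: "p \<in> Y3" and px: "p \<in> N x"
  shows False
proof -
  have K0: "K \<ge> 0" by (rule K_nonneg)
  have t0: "real t \<ge> 0" by simp
  have noR: "\<And>a. a \<in> N y \<Longrightarrow> N a \<inter> R = {}" using yY yn unfolding Y3_def by blast
  have pY: "p \<in> Y" using p unfolding Y3_def by blast
  have xV: "x \<in> V" and yV: "y \<in> V" and pV: "p \<in> V" using xX yY pY XV YV by auto
  have Exp: "E x p" using px memN by blast
  have yNx: "y \<in> N x" using Nsym[OF yV xy] .
  have Exy: "E x y" using yNx memN by blast
  have dy: "real (card (N y)) \<ge> 64 * (real t + K + 2)" using degV[OF yV] .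
  have dx: "real (card (N x)) \<ge> 64 * (real t + K + 2)" using degV[OF xV] .
  have Dl1: "real Dl \<ge> 64 * (real t + K + 2)" using Dl_D Dge by (linarith | argo)
  define Rp where "Rp = {w \<in> N p. rich w}"
  have cRp: "real (card Rp) > K" using rich_many[OF p] unfolding Rp_def .
  define S3 where "S3 = {a \<in> N p - {x}. eps / 8 * real (card (N x - {p})) \<le> real (card ((N x - {p}) - N a))}"
  have cS3: "real (card S3) \<le> K" by (rule few_bad[OF xX pY Exp]) (auto simp: S3_def)
  have finS3: "finite S3" unfolding S3_def using finN by simp
  have finRp: "finite Rp" unfolding Rp_def using finN by simp
  have "real (card (Rp - S3)) \<ge> real (card Rp) - real (card S3)" using card_Diff_ge[OF finRp finS3] .
  then have "real (card (Rp - S3)) > 0" using cRp cS3 by (linarith | argo)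
  then have "Rp - S3 \<noteq> {}" by (metis card.empty of_nat_0 less_irrefl)
  then obtain w where wRp: "w \<in> Rp" and wS3: "w \<notin> S3" by blast
  have wNp: "w \<in> N p" and wrich: "rich w" using wRp unfolding Rp_def by auto
  have wX: "w \<in> X" using NY pY wNp by blast
  have wR: "real (card (N w \<inter> R)) \<ge> (1 - eps / 2) * real Dl" using wrich unfolding rich_def .
  have wR2: "real (card (N w \<inter> R)) \<ge> real Dl / 2"
  proof -
    have "(1 - eps / 2) * real Dl \<ge> real Dl / 2" using eps Dl1 K0 t0 by (simp add: field_simps)
    then show ?thesis using wR by (linarith | argo)
  qed
  have wRne: "N w \<inter> R \<noteq> {}"
  proof
    assume "N w \<inter> R = {}"
    then show False using wR2 Dl1 K0 t0 by simp
  qed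
  have wx: "w \<noteq> x" using wRne noR[OF xy] by blast
  have hw: "real (card ((N x - {p}) - N w)) < eps / 8 * real (card (N x - {y}))"
  proof -
    have "\<not> (eps / 8 * real (card (N x - {p})) \<le> real (card ((N x - {p}) - N w)))"
      using wS3 wNp wx unfolding S3_def by blast
    moreover have "real (card (N x - {p})) = real (card (N x - {y}))"
      using card_minus_one[OF px finN] card_minus_one[OF yNx finN] by simp
    ultimately show ?thesis by (simp add: not_le)
  qed
  define S where "S = {a \<in> N y - {x}. eps / 8 * real (card (N x - {y})) \<le> real (card ((N x - {y}) - N a))}"
  have cS: "real (card S) \<le> K" by (rule few_bad[OF xX yY Exy]) (auto simp: S_def)
  have finS: "finite S" unfolding S_def using finN by simp
  define Ay where "Ay = N y - {x} - S"
  have cAy: "real (card Ay) \<ge> real (card (N y)) - 1 - K"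
  proof -
    have "real (card (N y - {x})) = real (card (N y)) - 1" using card_minus_one[OF xy finN] .
    moreover have "real (card Ay) \<ge> real (card (N y - {x})) - real (card S)"
      unfolding Ay_def using card_Diff_ge[OF _ finS, of "N y - {x}"] finN by simp
    ultimately show ?thesis using cS by (linarith | argo)
  qed
  have finAy: "finite Ay" unfolding Ay_def using finN by simp
  have AyV: "Ay \<subseteq> V" unfolding Ay_def using NV by blast
  have Ayne: "Ay \<noteq> {}"
  proof
    assume "Ay = {}"
    then show False using cAy dy K0 t0 by simp
  qed
  have hA: "real (card ((N x - {y}) - N a)) < eps / 8 * real (card (N x - {y}))" if a: "a \<in> Ay" for a
  proof -
    have "\<not> (eps / 8 * real (card (N x - {y})) \<le> real (card ((N x - {y}) - N a)))"
      using a unfolding Ay_def S_def by blast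
    then show ?thesis by (linarith | argo)
  qed
  have beta: "real (card (N x - {y})) \<ge> 4"
    using card_minus_one[OF yNx finN] dx K0 t0 by (linarith | argo)
  obtain b where b: "b \<in> (N x \<inter> N w) - {y}" and cb: "real (card (N b \<inter> Ay)) \<ge> real (card Ay) / 2"
    using find_b[OF xX yNx AyV finAy Ayne hA hw beta] by blast
  have bY: "b \<in> Y" using b NX xX by blast
  have bNw: "b \<in> N w" using b by blast
  have Ewb: "E w b" using bNw memN by blast
  have wAy: "w \<notin> Ay" using wRne noR unfolding Ay_def by blast
  have sub1: "N b \<inter> Ay \<subseteq> N b - {w}" using wAy by blast
  have sub2: "(N w \<inter> R) - {b} \<subseteq> N w - {b}" by blast
  have c1: "t \<le> card (N b \<inter> Ay)"
  proof -
    have "real t \<le> real (card (N b \<inter> Ay))" using cb cAy dy K0 t0 by (linarith | argo)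
    then show ?thesis by simp
  qed
  have c2: "t \<le> card ((N w \<inter> R) - {b})"
  proof -
    have "finite (N w \<inter> R)" using finN by simp
    then have "real (card ((N w \<inter> R) - {b})) \<ge> real (card (N w \<inter> R)) - 1"
      using card_Diff_ge[of "N w \<inter> R" "{b}"] by simp
    then have "real t \<le> real (card ((N w \<inter> R) - {b}))" using wR2 Dl1 K0 t0 by (linarith | argo)
    then show ?thesis by simp
  qed
  obtain a b' where a: "a \<in> N b \<inter> Ay" and b': "b' \<in> (N w \<inter> R) - {b}" and ab: "E a b'"
    using nohole[OF wX bY Ewb sub1 c1 sub2 c2] by blast
  have aNy: "a \<in> N y" using a unfolding Ay_def by blast
  have "b' \<in> N a \<inter> R" using b' ab NV memN by blast
  then show False using noR[OF aNy] by blast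
qed

lemma Y3_all: "Y3 = Y"
proof (rule ccontr)
  assume "Y3 \<noteq> Y"
  moreover have "Y3 \<subseteq> Y" unfolding Y3_def by blast
  ultimately obtain y where yY: "y \<in> Y" and yn: "y \<notin> Y3" by blast
  define Ss where "Ss = Y3 \<union> {x \<in> X. \<exists>p\<in>Y3. p \<in> N x}"
  have RY3: "R \<subseteq> Y3"
  proof
    fix r assume r: "r \<in> R"
    have rY: "r \<in> Y" using r NX xs(1) by blast
    have xsV: "xs \<in> V" using xs(1) XV by blast
    have "xs \<in> N r" using Nsym[OF xsV r] .
    then show "r \<in> Y3" unfolding Y3_def using rY r by blast
  qed
  have Rne: "R \<noteq> {}"
  proof
    assume "R = {}"
    then have "real (card R) = 0" by simp
    moreover have "real (card R) \<ge> 64 * (real t + K + 2)" using degV xs XV by blast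
    ultimately show False using K_nonneg by simp
  qed
  have xsS: "xs \<in> Ss" unfolding Ss_def using xs(1) RY3 Rne by blast
  have reach: "(\<lambda>a b. a \<in> V \<and> b \<in> V \<and> E a b)\<^sup>*\<^sup>* xs y"
    using conn xs(1) yY XV YV unfolding connected_graph_def by blast
  have "v \<in> Ss" if "(\<lambda>a b. a \<in> V \<and> b \<in> V \<and> E a b)\<^sup>*\<^sup>* xs v" for v
    using that
  proof (induction rule: rtranclp_induct)
    case base
    then show ?case using xsS .
  next
    case (step u v)
    have uV: "u \<in> V" and vV: "v \<in> V" and Euv: "E u v" using step.hyps(2) by auto
    have vNu: "v \<in> N u" using vV Euv memN by blast
    show ?case
    proof (cases "u \<in> Y3")
      case True
      then have uY: "u \<in> Y" unfolding Y3_def by blast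
      have vX: "v \<in> X" using NY uY vNu by blast
      have "u \<in> N v" using Nsym[OF uV vNu] .
      then show ?thesis unfolding Ss_def using vX True by blast
    next
      case False
      then obtain p where uX: "u \<in> X" and p: "p \<in> Y3" and pu: "p \<in> N u"
        using step.IH unfolding Ss_def by blast
      have vY: "v \<in> Y" using NX uX vNu by blast
      have uNv: "u \<in> N v" using Nsym[OF uV vNu] .
      show ?thesis
      proof (cases "v \<in> Y3")
        case True then show ?thesis unfolding Ss_def by blast
      next
        case False
        then show ?thesis using no_triple[OF vY False uX uNv p pu] by blast
      qed
    qed
  qed
  then have "y \<in> Ss" using reach by blast
  moreover have "y \<notin> X" using yY XY by blast
  ultimately show False using yn unfolding Ss_def by blast
qed

lemma lowA:
  assumes yY: "y \<in> Y"
  shows "real (card (N y \<inter> low_set V E X eps)) \<le> K"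
proof -
  have K0: "K \<ge> 0" by (rule K_nonneg)
  have t0: "real t \<ge> 0" by simp
  have yV: "y \<in> V" using yY YV by blast
  have Dl1: "real Dl \<ge> 64 * (real t + K + 2)" using Dl_D Dge by (linarith | argo)
  have "y \<in> Y3" using Y3_all yY by blast
  then have "real (card {w \<in> N y. rich w}) > K" by (rule rich_many)
  then have "{w \<in> N y. rich w} \<noteq> {}" using K0 by (metis card.empty of_nat_0 not_le)
  then obtain w where wNy: "w \<in> N y" and wrich: "rich w" by blast
  have wX: "w \<in> X" using NY yY wNy by blast
  have yNw: "y \<in> N w" using Nsym[OF yV wNy] .
  have Ewy: "E w y" using yNw memN by blast
  have dw: "real (card (N w)) \<ge> (1 - eps / 2) * real Dl"
  proof -
    have "card (N w \<inter> R) \<le> card (N w)" using finN by (intro card_mono) auto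
    then show ?thesis using wrich unfolding rich_def by (linarith | argo)
  qed
  have dwD: "real (card (N w)) \<le> real Dl" using Dl_ge[OF wX] by simp
  define S where "S = {u \<in> N y - {w}. eps / 8 * real (card (N w - {y})) \<le> real (card ((N w - {y}) - N u))}"
  have cS: "real (card S) \<le> K" by (rule few_bad[OF wX yY Ewy]) (auto simp: S_def)
  have sub: "N y \<inter> low_set V E X eps \<subseteq> S"
  proof
    fix u assume u: "u \<in> N y \<inter> low_set V E X eps"
    have uNy: "u \<in> N y" using u by blast
    have ulow: "real (card (N u)) \<le> (1 - eps) * real Dl"
      using u degN unfolding low_set_def by auto
    have uV: "u \<in> V" using uNy NV by blast
    have yNu: "y \<in> N u" using Nsym[OF yV uNy] .
    have uw: "u \<noteq> w"
    proof
      assume "u = w"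
      then have "real (card (N w)) \<le> (1 - eps) * real Dl" using ulow by simp
      then have "(1 - eps / 2) * real Dl \<le> (1 - eps) * real Dl" using dw by (linarith | argo)
      moreover have "eps * real Dl > 0" using eps Dl1 K0 t0 by simp
      ultimately show False by (simp add: algebra_simps)
    qed
    have fin: "finite (N w - {y})" using finN by simp
    have "card (N w - {y}) = card ((N w - {y}) \<inter> N u) + card ((N w - {y}) - N u)"
      by (rule card_split[OF fin])
    moreover have "card ((N w - {y}) \<inter> N u) \<le> card (N u - {y})" using finN by (intro card_mono) auto
    moreover have "real (card (N u - {y})) = real (card (N u)) - 1" using card_minus_one[OF yNu finN] .
    moreover have "real (card (N w - {y})) = real (card (N w)) - 1" using card_minus_one[OF yNw finN] .
    ultimately have "real (card ((N w - {y}) - N u)) \<ge> real (card (N w)) - real (card (N u))"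
      by (linarith | argo)
    moreover have "eps / 8 * real (card (N w - {y})) \<le> eps / 8 * real Dl"
    proof -
      have "real (card (N w - {y})) \<le> real Dl" using card_minus_one[OF yNw finN] dwD by (linarith | argo)
      then show ?thesis using eps by (intro mult_left_mono) auto
    qed
    moreover have "(1 - eps / 2) * real Dl - (1 - eps) * real Dl = eps / 2 * real Dl" by (simp add: algebra_simps)
    moreover have "eps / 8 * real Dl \<le> eps / 2 * real Dl" using eps Dl1 K0 t0 by (simp add: field_simps)
    ultimately have "eps / 8 * real (card (N w - {y})) \<le> real (card ((N w - {y}) - N u))"
      using dw ulow by (linarith | argo)
    then show "u \<in> S" unfolding S_def using uNy uw by blast
  qed
  have "card (N y \<inter> low_set V E X eps) \<le> card S"
    using sub by (intro card_mono) (auto simp: S_def finN)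
  then show ?thesis using cS by (linarith | argo)
qed


lemma two_match:
  assumes lowY: "\<And>x. x \<in> X \<Longrightarrow> real (card (N x \<inter> low_set V E Y eps)) \<le> K"
  shows "\<exists>vm vp. (\<forall>u\<in>low_set V E X eps.
             vm u \<in> Y - low_set V E Y eps \<and> vp u \<in> Y - low_set V E Y eps \<and>
             E u (vm u) \<and> E u (vp u)) \<and>
          inj_on vm (low_set V E X eps) \<and> inj_on vp (low_set V E X eps) \<and>
          vm ` low_set V E X eps \<inter> vp ` low_set V E X eps = {}"
proof -
  define U where "U = low_set V E X eps"
  define H where "H = Y - low_set V E Y eps"
  have UX: "U \<subseteq> X" unfolding U_def low_set_def by auto
  have finU: "finite U" using UX finX finite_subset by blast
  have K0: "K \<ge> 0" by (rule K_nonneg)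
  have t0: "real t \<ge> 0" by simp
  have DK: "D \<ge> 3 * K + 1" using Dge K0 t0 by (linarith | argo)
  define I where "I = U \<times> {0::nat, 1}"
  define A where "A = (\<lambda>(u, k::nat). N u \<inter> H)"
  have finI: "finite I" unfolding I_def using finU by simp
  have finA: "\<forall>i\<in>I. finite (A i)" unfolding A_def using finN by auto
  have goodnb: "real (card (N u \<inter> H)) \<ge> D - K" if u: "u \<in> U" for u
  proof -
    have uX: "u \<in> X" using u UX by blast
    have uV: "u \<in> V" using uX XV by blast
    have "N u \<inter> H = N u - low_set V E Y eps" unfolding H_def using NX[OF uX] by blast
    moreover have "card (N u) = card (N u \<inter> low_set V E Y eps) + card (N u - low_set V E Y eps)"
      by (rule card_split[OF finN])
    ultimately have "real (card (N u \<inter> H)) = real (card (N u)) - real (card (N u \<inter> low_set V E Y eps))"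
      by simp
    then show ?thesis using lowY[OF uX] degD[OF uV] by (linarith | argo)
  qed
  have hall: "\<forall>J\<subseteq>I. card J \<le> card (\<Union>(A ` J))"
  proof (intro allI impI)
    fix J assume J: "J \<subseteq> I"
    define S where "S = fst ` J"
    define T where "T = \<Union>(A ` J)"
    have SU: "S \<subseteq> U" unfolding S_def using J unfolding I_def by auto
    have finS: "finite S" using SU finU finite_subset by blast
    have cJ: "card J \<le> 2 * card S"
    proof -
      have "J \<subseteq> S \<times> {0::nat, 1}" unfolding S_def using J unfolding I_def by force
      then have "card J \<le> card (S \<times> {0::nat, 1})" using finS by (intro card_mono) auto
      also have "\<dots> = 2 * card S" by (simp add: card_cartesian_product mult.commute)
      finally show ?thesis .
    qed
    have Teq: "T = (\<Union>u\<in>S. N u \<inter> H)" unfolding T_def S_def A_def by force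
    have finT: "finite T" unfolding Teq using finS finN by simp
    have TY: "T \<subseteq> Y" unfolding Teq H_def by blast
    have e1: "{y\<in>T. y \<in> N u} = N u \<inter> H" if u: "u \<in> S" for u
      using u unfolding Teq H_def by blast
    have e2: "{u\<in>S. y \<in> N u} = N y \<inter> S" if y: "y \<in> T" for y
    proof -
      have yV: "y \<in> V" using y TY YV by blast
      have SV: "S \<subseteq> V" using SU UX XV by blast
      show ?thesis
      proof (intro equalityI subsetI)
        fix u assume "u \<in> {u\<in>S. y \<in> N u}"
        then show "u \<in> N y \<inter> S" using SV Nsym by blast
      next
        fix u assume "u \<in> N y \<inter> S"
        then show "u \<in> {u\<in>S. y \<in> N u}" using yV Nsym by blast
      qed
    qed
    have nateq: "(\<Sum>u\<in>S. card (N u \<inter> H)) = (\<Sum>y\<in>T. card (N y \<inter> S))"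
    proof -
      have "(\<Sum>u\<in>S. card (N u \<inter> H)) = (\<Sum>u\<in>S. card {y\<in>T. y \<in> N u})"
        by (rule sum.cong) (simp_all only: e1)
      also have "\<dots> = (\<Sum>y\<in>T. card {u\<in>S. y \<in> N u})" by (rule double_count[OF finS finT])
      also have "\<dots> = (\<Sum>y\<in>T. card (N y \<inter> S))" by (rule sum.cong) (simp_all only: e2)
      finally show ?thesis .
    qed
    have "real (\<Sum>u\<in>S. card (N u \<inter> H)) = real (\<Sum>y\<in>T. card (N y \<inter> S))" using nateq by (rule arg_cong)
    then have req: "(\<Sum>u\<in>S. real (card (N u \<inter> H))) = (\<Sum>y\<in>T. real (card (N y \<inter> S)))" by simp
    have lhs: "(\<Sum>u\<in>S. real (card (N u \<inter> H))) \<ge> real (card S) * (D - K)"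
    proof -
      have "(\<Sum>u\<in>S. D - K) \<le> (\<Sum>u\<in>S. real (card (N u \<inter> H)))"
        by (rule sum_mono) (use goodnb SU in blast)
      moreover have "(\<Sum>u\<in>S. D - K) = real (card S) * (D - K)" by (rule sum_constant)
      ultimately show ?thesis by (linarith | argo)
    qed
    have rhs: "(\<Sum>y\<in>T. real (card (N y \<inter> S))) \<le> real (card T) * K"
    proof -
      have "(\<Sum>y\<in>T. real (card (N y \<inter> S))) \<le> (\<Sum>y\<in>T. K)"
      proof (rule sum_mono)
        fix y assume y: "y \<in> T"
        have yY: "y \<in> Y" using y TY by blast
        have "card (N y \<inter> S) \<le> card (N y \<inter> low_set V E X eps)"
          using SU finN unfolding U_def by (intro card_mono) auto
        then show "real (card (N y \<inter> S)) \<le> K" using lowA[OF yY] by (linarith | argo)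
      qed
      moreover have "(\<Sum>y\<in>T. K) = real (card T) * K" by (rule sum_constant)
      ultimately show ?thesis by (linarith | argo)
    qed
    have main: "real (card S) * (D - K) \<le> real (card T) * K" using lhs rhs req by (linarith | argo)
    have "2 * card S \<le> card T"
    proof (cases "K = 0")
      case True
      then have "real (card S) * D \<le> 0" using main by simp
      moreover have "D > 0" using DK K0 by (linarith | argo)
      ultimately have "card S = 0" by (simp add: mult_le_0_iff)
      then show ?thesis by simp
    next
      case False
      then have Kp: "K > 0" using K0 by simp
      have "real (card S) * (2 * K) \<le> real (card S) * (D - K)"
        using DK by (intro mult_left_mono) auto
      then have "(2 * real (card S)) * K \<le> real (card T) * K" using main by (simp add: algebra_simps)
      then have "2 * real (card S) \<le> real (card T)" using Kp by simp
      then show ?thesis by linarith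
    qed
    then show "card J \<le> card (\<Union>(A ` J))" using cJ unfolding T_def by simp
  qed
  obtain f where finj: "inj_on f I" and fA: "\<forall>i\<in>I. f i \<in> A i"
    using hall_thm[OF finI finA hall] by blast
  define vm where "vm = (\<lambda>u. f (u, 0::nat))"
  define vp where "vp = (\<lambda>u. f (u, 1::nat))"
  have mem0: "\<And>u. u \<in> U \<Longrightarrow> (u, 0::nat) \<in> I" and mem1: "\<And>u. u \<in> U \<Longrightarrow> (u, 1::nat) \<in> I"
    unfolding I_def by auto
  have P1: "\<forall>u\<in>U. vm u \<in> H \<and> vp u \<in> H \<and> E u (vm u) \<and> E u (vp u)"
  proof
    fix u assume u: "u \<in> U"
    have "f (u, 0) \<in> N u \<inter> H" using fA mem0[OF u] unfolding A_def by auto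
    moreover have "f (u, 1) \<in> N u \<inter> H" using fA mem1[OF u] unfolding A_def by auto
    ultimately show "vm u \<in> H \<and> vp u \<in> H \<and> E u (vm u) \<and> E u (vp u)"
      unfolding vm_def vp_def using memN by blast
  qed
  have P2: "inj_on vm U"
  proof (rule inj_onI)
    fix u v assume "u \<in> U" "v \<in> U" "vm u = vm v"
    then show "u = v" using finj mem0 unfolding vm_def by (metis inj_onD prod.inject)
  qed
  have P3: "inj_on vp U"
  proof (rule inj_onI)
    fix u v assume "u \<in> U" "v \<in> U" "vp u = vp v"
    then show "u = v" using finj mem1 unfolding vp_def by (metis inj_onD prod.inject)
  qed
  have P4: "vm ` U \<inter> vp ` U = {}"
  proof (rule ccontr)
    assume "vm ` U \<inter> vp ` U \<noteq> {}"
    then obtain u v where u: "u \<in> U" and v: "v \<in> U" and e: "f (u, 0) = f (v, 1)"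
      unfolding vm_def vp_def by blast
    have "(u, 0::nat) = (v, 1)" using inj_onD[OF finj e mem0[OF u] mem1[OF v]] .
    then show False by simp
  qed
  show ?thesis using P1 P2 P3 P4 unfolding U_def H_def by blast
qed

end

lemma bip_swap: "bipartition V E X Y \<Longrightarrow> bipartition V E Y X"
  unfolding bipartition_def by auto

lemma Kc_nonneg: "eps > 0 \<Longrightarrow> Kc t eps \<ge> 0"
  unfolding Kc_def by simp

theorem mainTheorem15:
  shows "\<exists>C :: nat \<Rightarrow> real \<Rightarrow> real. \<forall>t eps. t \<ge> 1 \<longrightarrow> 0 < eps \<longrightarrow> eps < 1 \<longrightarrow>
    (\<forall>(V :: nat set) E X Y n.
       simple_graph V E \<and> connected_graph V E \<and> bipartition V E X Y \<and>
       card X = n \<and> card Y = n \<and>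
       real (min_degree V E) \<ge> 3 * C t eps \<and> induced_biclaw_free V E t \<longrightarrow>
       (\<exists>vm vp. (\<forall>u\<in>low_set V E X eps.
             vm u \<in> Y - low_set V E Y eps \<and> vp u \<in> Y - low_set V E Y eps \<and>
             E u (vm u) \<and> E u (vp u)) \<and>
          inj_on vm (low_set V E X eps) \<and> inj_on vp (low_set V E X eps) \<and>
          vm ` low_set V E X eps \<inter> vp ` low_set V E X eps = {}) \<and>
       (\<exists>um up. (\<forall>v\<in>low_set V E Y eps.
             um v \<in> X - low_set V E X eps \<and> up v \<in> X - low_set V E X eps \<and>
             E v (um v) \<and> E v (up v)) \<and>
          inj_on um (low_set V E Y eps) \<and> inj_on up (low_set V E Y eps) \<and>
          um ` low_set V E Y eps \<inter> up ` low_set V E Y eps = {}))"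
proof -
  define C where "C = (\<lambda>(t::nat) (eps::real). 64 * (real t + Kc t eps + 2) / eps)"
  show ?thesis
  proof (rule exI[of _ C], intro allI impI)
    fix t :: nat and eps :: real and V :: "nat set" and E X Y and n :: nat
    assume t1: "t \<ge> 1" and e0: "0 < eps" and e1: "eps < 1"
    assume H: "simple_graph V E \<and> connected_graph V E \<and> bipartition V E X Y \<and>
       card X = n \<and> card Y = n \<and>
       real (min_degree V E) \<ge> 3 * C t eps \<and> induced_biclaw_free V E t"
    have sg: "simple_graph V E" and cg: "connected_graph V E" and bp: "bipartition V E X Y"
      and md: "real (min_degree V E) \<ge> 3 * C t eps" and fr: "induced_biclaw_free V E t"
      using H by auto
    define D where "D = 3 * C t eps"
    have finV: "finite V" using sg unfolding simple_graph_def by auto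
    have mindeg: "\<And>v. v \<in> V \<Longrightarrow> D \<le> real (degree V E v)"
    proof -
      fix v assume v: "v \<in> V"
      have "min_degree V E \<le> degree V E v"
        unfolding min_degree_def using finV v by (intro Min_le) auto
      then show "D \<le> real (degree V E v)" using md unfolding D_def by linarith
    qed
    have Cnn: "C t eps \<ge> 0" unfolding C_def using Kc_nonneg[OF e0, of t] e0 by simp
    have Dbig: "64 * (real t + Kc t eps + 2) / eps \<le> D"
    proof -
      have "64 * (real t + Kc t eps + 2) / eps = C t eps" unfolding C_def by simp
      then show ?thesis unfolding D_def using Cnn by linarith
    qed
    have G1: "bgraph V E X Y t eps D"
      unfolding bgraph_def using sg bp cg fr t1 e0 e1 mindeg Dbig by blast
    have G2: "bgraph V E Y X t eps D"
      unfolding bgraph_def using sg bip_swap[OF bp] cg fr t1 e0 e1 mindeg Dbig by blast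
    show "(\<exists>vm vp. (\<forall>u\<in>low_set V E X eps.
             vm u \<in> Y - low_set V E Y eps \<and> vp u \<in> Y - low_set V E Y eps \<and>
             E u (vm u) \<and> E u (vp u)) \<and>
          inj_on vm (low_set V E X eps) \<and> inj_on vp (low_set V E X eps) \<and>
          vm ` low_set V E X eps \<inter> vp ` low_set V E X eps = {}) \<and>
       (\<exists>um up. (\<forall>v\<in>low_set V E Y eps.
             um v \<in> X - low_set V E X eps \<and> up v \<in> X - low_set V E X eps \<and>
             E v (um v) \<and> E v (up v)) \<and>
          inj_on um (low_set V E Y eps) \<and> inj_on up (low_set V E Y eps) \<and>
          um ` low_set V E Y eps \<inter> up ` low_set V E Y eps = {})"
    proof
      show "\<exists>vm vp. (\<forall>u\<in>low_set V E X eps.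
             vm u \<in> Y - low_set V E Y eps \<and> vp u \<in> Y - low_set V E Y eps \<and>
             E u (vm u) \<and> E u (vp u)) \<and>
          inj_on vm (low_set V E X eps) \<and> inj_on vp (low_set V E X eps) \<and>
          vm ` low_set V E X eps \<inter> vp ` low_set V E X eps = {}"
        by (rule bgraph.two_match[OF G1 bgraph.lowA[OF G2]])
      show "\<exists>um up. (\<forall>v\<in>low_set V E Y eps.
             um v \<in> X - low_set V E X eps \<and> up v \<in> X - low_set V E X eps \<and>
             E v (um v) \<and> E v (up v)) \<and>
          inj_on um (low_set V E Y eps) \<and> inj_on up (low_set V E Y eps) \<and>
          um ` low_set V E Y eps \<inter> up ` low_set V E Y eps = {}"
        by (rule bgraph.two_match[OF G2 bgraph.lowA[OF G1]])
    qed
  qed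
qed

end
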